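(* Let $k\geq2$ and let $L=(l_1,\dots,l_k)$ be generic and reduced positive integers with sum $n$, and fix a vertex $v_0\in\mathbb{Z}_n$ of $T=Tonn^{n,k}(L)$. For nonnegative integers $p_1,\dots,p_k$ with $p_1l_1+\dots+p_kl_k\equiv0\pmod n$, let $E_1^{p_1}\cdots E_k^{p_k}$ denote the closed edge-path based at $v_0$ which makes $p_1$ steps of type 1, then $p_2$ steps of type 2, ..., then $p_k$ steps of type $k$. Then (i) every closed edge-path based at $v_0$ is homotopic rel $v_0$ to such a path, so every class of $H_1(T;\mathbb{Z})$ is represented by one; and (ii) two such paths $E_1^{p_1}\cdots E_k^{p_k}$ and $E_1^{p'_1}\cdots E_k^{p'_k}$ are homologous if and only if $(p_1,\dots,p_k)-(p'_1,\dots,p'_k)\in\mathbb{Z}\,(1,1,\dots,1)$.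
   Context: $L$ is generic if for all $I,J\subseteq[k]$, $\sum_{i\in I}l_i=\sum_{j\in J}l_j$ implies $I=J$; reduced if $\gcd(l_1,\dots,l_k)=1$. The generalized tonnetz $Tonn^{n,k}(L)$ is the simplicial complex on vertex set $\mathbb{Z}_n$ whose maximal simplices are $\Delta(x;\sigma)=\{x,\,x+l_{\sigma(1)},\dots,x+l_{\sigma(1)}+\dots+l_{\sigma(k-1)}\}$ for $x\in\mathbb{Z}_n$, $\sigma\in S_k$. A step of type $i$ from a vertex $y$ is the oriented 1-simplex from $y$ to $y+l_i$. *)

theory Defs
  imports "HOL-Combinatorics.Permutations"
begin

text \<open>Conventions: the type indices 1..k of the paper are 0..k-1 here; the list
L has entries L!0,...,L!(k-1); vertices of Z_n are represented by 0..n-1 with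
addition mod n.\<close>

definition generic :: "nat list \<Rightarrow> bool" where
  "generic L \<longleftrightarrow> (\<forall>I J. I \<subseteq> {0..<length L} \<longrightarrow> J \<subseteq> {0..<length L} \<longrightarrow>
      (\<Sum>i\<in>I. L!i) = (\<Sum>j\<in>J. L!j) \<longrightarrow> I = J)"

definition reduced :: "nat list \<Rightarrow> bool" where
  "reduced L \<longleftrightarrow> Gcd (set L) = 1"

definition Delta :: "nat \<Rightarrow> nat list \<Rightarrow> nat \<Rightarrow> (nat \<Rightarrow> nat) \<Rightarrow> nat set" where
  "Delta n L x \<sigma> = {(x + (\<Sum>j<m. L!(\<sigma> j))) mod n | m. m < length L}"

definition tonnetz :: "nat \<Rightarrow> nat list \<Rightarrow> nat set set" where
  "tonnetz n L = {S. S \<noteq> {} \<and> (\<exists>x<n. \<exists>\<sigma>. \<sigma> permutes {0..<length L} \<and> S \<subseteq> Delta n L x \<sigma>)}"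

definition edge_path :: "nat set set \<Rightarrow> nat list \<Rightarrow> bool" where
  "edge_path T p \<longleftrightarrow> p \<noteq> [] \<and> (\<forall>i<length p. {p!i} \<in> T) \<and>
      (\<forall>i. i + 1 < length p \<longrightarrow> {p!i, p!(i+1)} \<in> T)"

definition closed_edge_path :: "nat set set \<Rightarrow> nat \<Rightarrow> nat list \<Rightarrow> bool" where
  "closed_edge_path T v p \<longleftrightarrow> edge_path T p \<and> hd p = v \<and> last p = v"

text \<open>Elementary edge-path moves (combinatorial homotopy rel endpoints):
 u v w ~ u w whenever {u,v,w} is a simplex, and u u ~ u.\<close>
definition elem_move :: "nat set set \<Rightarrow> nat list \<Rightarrow> nat list \<Rightarrow> bool" where
  "elem_move T p q \<longleftrightarrow>
     (\<exists>xs ys u v w. p = xs @ [u, v, w] @ ys \<and> q = xs @ [u, w] @ ys \<and> {u, v, w} \<in> T) \<or>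
     (\<exists>xs ys u. p = xs @ [u, u] @ ys \<and> q = xs @ [u] @ ys)"

definition edge_homotopic :: "nat set set \<Rightarrow> nat list \<Rightarrow> nat list \<Rightarrow> bool" where
  "edge_homotopic T p q \<longleftrightarrow> edge_path T p \<and> edge_path T q \<and>
     (\<lambda>a b. elem_move T a b \<or> elem_move T b a)\<^sup>*\<^sup>* p q"

text \<open>Simplicial homology via the ordered chain complex with integer coefficients.
 1-chains: functions on ordered pairs supported on pairs spanning a simplex;
 2-chains: functions on ordered triples supported on triples spanning a simplex.
 The boundary of (a,b,c) is (b,c) - (a,c) + (a,b); the boundary of (a,b) is b - a.\<close>
definition chain1 :: "nat set set \<Rightarrow> (nat \<times> nat \<Rightarrow> int) \<Rightarrow> bool" where
  "chain1 T z \<longleftrightarrow> (\<forall>a b. z (a, b) \<noteq> 0 \<longrightarrow> {a, b} \<in> T)"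

definition chain2 :: "nat set set \<Rightarrow> (nat \<times> nat \<times> nat \<Rightarrow> int) \<Rightarrow> bool" where
  "chain2 T c \<longleftrightarrow> (\<forall>a b d. c (a, b, d) \<noteq> 0 \<longrightarrow> {a, b, d} \<in> T)"

definition bd1 :: "nat \<Rightarrow> (nat \<times> nat \<Rightarrow> int) \<Rightarrow> nat \<Rightarrow> int" where
  "bd1 n z v = (\<Sum>x<n. z (x, v) - z (v, x))"

definition bd2 :: "nat \<Rightarrow> (nat \<times> nat \<times> nat \<Rightarrow> int) \<Rightarrow> nat \<times> nat \<Rightarrow> int" where
  "bd2 n c = (\<lambda>(a, b). \<Sum>x<n. c (x, a, b) - c (a, x, b) + c (a, b, x))"

definition cycle1 :: "nat \<Rightarrow> nat set set \<Rightarrow> (nat \<times> nat \<Rightarrow> int) \<Rightarrow> bool" where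
  "cycle1 n T z \<longleftrightarrow> chain1 T z \<and> (\<forall>v. bd1 n z v = 0)"

definition homologous :: "nat \<Rightarrow> nat set set \<Rightarrow> (nat \<times> nat \<Rightarrow> int) \<Rightarrow> (nat \<times> nat \<Rightarrow> int) \<Rightarrow> bool" where
  "homologous n T z z' \<longleftrightarrow> (\<exists>c. chain2 T c \<and> (\<forall>e. z e - z' e = bd2 n c e))"

definition path_chain :: "nat list \<Rightarrow> nat \<times> nat \<Rightarrow> int" where
  "path_chain p = (\<lambda>(a, b). int (card {i. i + 1 < length p \<and> p!i = a \<and> p!(i+1) = b}))"

fun walk :: "nat \<Rightarrow> nat list \<Rightarrow> nat \<Rightarrow> nat list \<Rightarrow> nat list" where
  "walk n L v [] = [v]"
| "walk n L v (i # is) = v # walk n L ((v + L!i) mod n) is"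

definition E_path :: "nat \<Rightarrow> nat list \<Rightarrow> nat \<Rightarrow> nat list \<Rightarrow> nat list" where
  "E_path n L v ps = walk n L v (concat (map (\<lambda>i. replicate (ps!i) i) [0..<length L]))"

definition admissible :: "nat \<Rightarrow> nat list \<Rightarrow> nat list \<Rightarrow> bool" where
  "admissible n L ps \<longleftrightarrow> length ps = length L \<and> (\<Sum>i<length L. ps!i * L!i) mod n = 0"

end

theory Submission
  imports Defs "HOL-Library.Multiset"
begin

abbreviation hrel where "hrel T \<equiv> (\<lambda>a b. elem_move T a b \<or> elem_move T b a)\<^sup>*\<^sup>*"

lemma hrel_sym: "hrel T p q \<Longrightarrow> hrel T q p"
proof (induction rule: rtranclp_induct)
  case base then show ?case by simp
next
  case (step y z)
  have "hrel T z y" using step(2) by auto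
  then show ?case using step(3) by (rule rtranclp_trans)
qed

lemma hrel_trans: "hrel T p q \<Longrightarrow> hrel T q r \<Longrightarrow> hrel T p r"
  by (rule rtranclp_trans)

lemma hrel_step: "elem_move T p q \<Longrightarrow> hrel T p q" by auto

lemma elem_move_app: "elem_move T p q \<Longrightarrow> elem_move T (xs @ p @ ys) (xs @ q @ ys)"
  unfolding elem_move_def
  apply (elim disjE exE conjE)
   apply (rule disjI1)
   apply (rule_tac x="xs @ xsa" in exI, rule_tac x="ysa @ ys" in exI) apply auto[1]
  apply (rule disjI2)
  apply (rule_tac x="xs @ xsa" in exI, rule_tac x="ysa @ ys" in exI) apply auto[1]
  done

lemma hrel_app: "hrel T p q \<Longrightarrow> hrel T (xs @ p @ ys) (xs @ q @ ys)"
proof (induction rule: rtranclp_induct)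
  case base then show ?case by simp
next
  case (step y z)
  have "elem_move T (xs @ y @ ys) (xs @ z @ ys) \<or> elem_move T (xs @ z @ ys) (xs @ y @ ys)"
    using step(2) elem_move_app by blast
  then show ?case using step(3) by (rule rtranclp.rtrancl_into_rtrancl[rotated])
qed

lemma hrel_cons: "hrel T p q \<Longrightarrow> hrel T (x # p) (x # q)"
  using hrel_app[of T p q "[x]" "[]"] by simp

lemma hrel_appr: "hrel T p q \<Longrightarrow> hrel T (p @ ys) (q @ ys)"
  using hrel_app[of T p q "[]" ys] by simp

lemma elem_move_last: "elem_move T p q \<Longrightarrow> last p = last q \<and> hd p = hd q \<and> p \<noteq> [] \<and> q \<noteq> []"
  unfolding elem_move_def
  by (auto simp: last_append hd_append)

lemma hrel_last: "hrel T p q \<Longrightarrow> p \<noteq> [] \<Longrightarrow> last p = last q \<and> hd p = hd q"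
proof (induction rule: rtranclp_induct)
  case base then show ?case by simp
next
  case (step y z)
  have "y \<noteq> []" using step(2) elem_move_last by blast
  then show ?case using step elem_move_last by (metis)
qed

lemma contract:
  assumes "\<And>A. A \<subseteq> S \<Longrightarrow> A \<noteq> {} \<Longrightarrow> A \<in> T"
  shows "set (u # ys @ [w]) \<subseteq> S \<Longrightarrow> hrel T (u # ys @ [w]) [u, w]"
proof (induction ys)
  case Nil then show ?case by simp
next
  case (Cons y ys)
  obtain r rest where rr: "ys @ [w] = r # rest" by (cases "ys @ [w]") auto
  have "r \<in> set (ys @ [w])" using rr by simp
  hence "{u, y, r} \<subseteq> S" using Cons.prems by auto
  hence "{u, y, r} \<in> T" using assms by blast
  hence "elem_move T ([] @ [u, y, r] @ rest) ([] @ [u, r] @ rest)"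
    unfolding elem_move_def by blast
  hence m: "elem_move T (u # (y # ys) @ [w]) (u # ys @ [w])"
    using rr by simp
  have "hrel T (u # ys @ [w]) [u, w]" using Cons by auto
  then show ?case by (rule hrel_trans[OF hrel_step[OF m]])
qed


lemma mod_back: "(v + S) mod n = v \<Longrightarrow> v < (n::nat) \<Longrightarrow> S mod n = 0"
  by (metis add.commute add_right_cancel div_mod_decomp mod_mult_self2_is_0)

lemma mod_step: assumes "(v::nat) < n" shows "(int ((v + l) mod n) - int v) mod int n = int l mod int n"
proof -
  have "int v = int v mod int n" using assms by simp
  hence "(int ((v + l) mod n) - int v) mod int n = (int (v + l) mod int n - int v mod int n) mod int n"
    by (simp only: zmod_int)
  also have "\<dots> = (int (v + l) - int v) mod int n" by (rule mod_diff_eq)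
  finally show ?thesis by simp
qed
lemma mod_pair: "(int ((x + a) mod n) - int ((x + b) mod n)) mod int n = (int a - int b) mod int (n::nat)"
proof -
  have "(int ((x + a) mod n) - int ((x + b) mod n)) mod int n = (int (x + a) mod int n - int (x + b) mod int n) mod int n"
    by (simp only: zmod_int)
  also have "\<dots> = (int (x + a) - int (x + b)) mod int n" by (rule mod_diff_eq)
  finally show ?thesis by simp
qed
lemma mod_shift: "(y::int) = z + int n \<Longrightarrow> y mod int n = z mod int n"
  by simp

lemma count_upt: "count_list [0..<m] i = (if i < m then 1 else 0)"
  by (induction m) auto

lemma count_rep: "count_list (replicate a i) x = (if i = x then a else 0)"
  by (induction a) auto

lemma cnc_count: "count_list (concat (map (\<lambda>i. replicate (c i) i) [0..<m])) x = (if x < m then c x else 0)"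
  by (induction m) (auto simp: count_rep)

lemma cnc_sorted: "sorted (concat (map (\<lambda>i. replicate (c i) i) [0..<m]))"
  by (induction m) (auto simp: sorted_append)

lemma cnc_set: "set (concat (map (\<lambda>i. replicate (c i) i) [0..<m])) \<subseteq> {..<m}"
  by auto

lemma pc_zip: "path_chain p = (\<lambda>e. int (count_list (zip p (tl p)) e))"
proof (rule ext, clarify)
  fix a b
  have "count_list (zip p (tl p)) (a, b) = card {i. i < length (zip p (tl p)) \<and> (a, b) = zip p (tl p) ! i}"
    by (simp add: count_list_eq_length_filter length_filter_conv_card)
  also have "{i. i < length (zip p (tl p)) \<and> (a, b) = zip p (tl p) ! i} = {i. i + 1 < length p \<and> p!i = a \<and> p!(i+1) = b}"
    by (auto simp: nth_tl)
  finally show "path_chain p (a, b) = int (count_list (zip p (tl p)) (a, b))"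
    by (simp add: path_chain_def)
qed

lemma pc_Nil: "path_chain [] e = 0" by (simp add: pc_zip)
lemma pc_single: "path_chain [a] e = 0" by (simp add: pc_zip)
lemma pc_cons2: "path_chain (a # b # R) e = (if e = (a, b) then 1 else 0) + path_chain (b # R) e"
  by (simp add: pc_zip)

lemma pc_glue: "path_chain (A @ [v]) e + path_chain (v # B) e = path_chain (A @ v # B) e"
proof (induction A)
  case Nil then show ?case by (simp add: pc_single)
next
  case (Cons a A)
  then show ?case by (cases A) (auto simp: pc_cons2)
qed

lemma bez_list: "\<exists>\<beta>::nat\<Rightarrow>int. (\<Sum>i<length xs. \<beta> i * int (xs!i)) = int (Gcd (set xs))"
proof (induction xs)
  case Nil then show ?case by simp
next
  case (Cons x xs)
  obtain \<beta> where b: "(\<Sum>i<length xs. \<beta> i * int (xs!i)) = int (Gcd (set xs))" using Cons by blast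
  obtain u v where uv: "u * int x + v * int (Gcd (set xs)) = gcd (int x) (int (Gcd (set xs)))"
    using bezout_int by blast
  define \<beta>' where "\<beta>' = (\<lambda>i. if i = 0 then u else v * \<beta> (i - 1))"
  have "(\<Sum>i<length (x # xs). \<beta>' i * int ((x # xs)!i)) = u * int x + (\<Sum>i<length xs. v * (\<beta> i * int (xs!i)))"
    unfolding \<beta>'_def by (simp add: sum.lessThan_Suc_shift del: sum.lessThan_Suc) (simp add: algebra_simps)
  also have "\<dots> = int (Gcd (set (x # xs)))" using b uv by (simp add: sum_distrib_left[symmetric])
  finally show ?case by blast
qed

locale tz =
  fixes n :: nat and L :: "nat list" and k :: nat
  assumes k2: "k \<ge> 2" and lenL: "length L = k" and pos: "\<forall>i<k. L!i > 0"
    and nsum: "n = sum_list L"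
begin

abbreviation "TT \<equiv> tonnetz n L"

definition P :: "(nat \<Rightarrow> nat) \<Rightarrow> nat \<Rightarrow> nat" where "P \<sigma> m = (\<Sum>j<m. L!(\<sigma> j))"

lemma n_sum: "n = (\<Sum>i<k. L!i)"
  using nsum lenL by (simp add: sum_list_sum_nth atLeast0LessThan)

lemma l_lt: assumes "i < k" shows "L!i < n"
proof -
  define j where "j = (if i = 0 then 1 else (0::nat))"
  have j: "j < k" "j \<noteq> i" using k2 unfolding j_def by auto
  have "(\<Sum>x\<in>{i,j}. L!x) \<le> (\<Sum>x<k. L!x)" by (rule sum_mono2) (use assms j in auto)
  thus ?thesis using j pos n_sum by auto
qed

lemma n_pos: "n > 0" using l_lt[of 0] k2 by simp

lemma P_perm: "\<sigma> permutes {..<k} \<Longrightarrow> P \<sigma> k = n"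
  unfolding P_def n_sum using sum.permute[of \<sigma> "{..<k}" "\<lambda>j. L!j"] by (simp add: comp_def)

lemma P_Suc: "P \<sigma> (Suc m) = P \<sigma> m + L!(\<sigma> m)" by (simp add: P_def)

lemma T_down: "S \<in> TT \<Longrightarrow> A \<subseteq> S \<Longrightarrow> A \<noteq> {} \<Longrightarrow> A \<in> TT"
  unfolding tonnetz_def by blast

lemma T_lt: "S \<in> TT \<Longrightarrow> x \<in> S \<Longrightarrow> x < n"
  unfolding tonnetz_def Delta_def using n_pos by auto

lemma Delta_mem: "m < k \<Longrightarrow> (x + P \<sigma> m) mod n \<in> Delta n L x \<sigma>"
  unfolding Delta_def P_def using lenL by auto

lemma Delta_T: "x < n \<Longrightarrow> \<sigma> permutes {..<k} \<Longrightarrow> Delta n L x \<sigma> \<in> TT"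
  unfolding tonnetz_def using Delta_mem[of 0 x \<sigma>] k2 lenL by (auto simp: atLeast0LessThan)

lemma sub_T: "x < n \<Longrightarrow> \<sigma> permutes {..<k} \<Longrightarrow> A \<subseteq> Delta n L x \<sigma> \<Longrightarrow> A \<noteq> {} \<Longrightarrow> A \<in> TT"
  using Delta_T T_down by blast

lemma walk_len: "length (walk n L v ts) = Suc (length ts)"
  by (induction ts arbitrary: v) auto

lemma walk_ne: "walk n L v ts \<noteq> []" by (cases ts) auto

lemma walk_hd: "hd (walk n L v ts) = v" by (cases ts) auto

lemma walk_nth: "v < n \<Longrightarrow> m \<le> length ts \<Longrightarrow> walk n L v ts ! m = (v + (\<Sum>j<m. L!(ts!j))) mod n"
proof (induction ts arbitrary: v m)
  case Nil then show ?case by simp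
next
  case (Cons t ts)
  show ?case
  proof (cases m)
    case 0 then show ?thesis using Cons by simp
  next
    case (Suc m')
    have "walk n L v (t # ts) ! m = walk n L ((v + L!t) mod n) ts ! m'" using Suc by simp
    also have "\<dots> = ((v + L!t) mod n + (\<Sum>j<m'. L!(ts!j))) mod n"
      using Cons Suc n_pos by simp
    also have "\<dots> = (v + (\<Sum>j<m. L!((t#ts)!j))) mod n"
      using Suc by (simp add: sum.lessThan_Suc_shift mod_add_left_eq add.assoc del: sum.lessThan_Suc)
    finally show ?thesis .
  qed
qed

lemma walk_last: "v < n \<Longrightarrow> last (walk n L v ts) = (v + sum_list (map ((!) L) ts)) mod n"
proof (induction ts arbitrary: v)
  case Nil then show ?case by simp
next
  case (Cons t ts)
  have "last (walk n L v (t#ts)) = last (walk n L ((v + L!t) mod n) ts)" using walk_ne by simp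
  also have "\<dots> = ((v + L!t) mod n + sum_list (map ((!) L) ts)) mod n" using Cons n_pos by simp
  also have "\<dots> = (v + sum_list (map ((!) L) (t#ts))) mod n" by (simp add: mod_add_left_eq add.assoc)
  finally show ?case .
qed

lemma walk_append: "walk n L v (a @ b) = butlast (walk n L v a) @ walk n L (last (walk n L v a)) b"
proof (induction a arbitrary: v)
  case Nil then show ?case by simp
next
  case (Cons t a) then show ?case using walk_ne by simp
qed

lemma walk_set: "v < n \<Longrightarrow> set (walk n L v ts) \<subseteq> {..<n}"
  by (induction ts arbitrary: v) (auto simp: n_pos)

lemma sigma2:
  assumes "i < k" "j < k" "i \<noteq> j"
  obtains \<sigma> where "\<sigma> permutes {..<k}" "\<sigma> 0 = i" "\<sigma> 1 = j"
proof -
  define t where "t = Transposition.transpose 0 i"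
  define \<sigma> where "\<sigma> = t \<circ> Transposition.transpose 1 (t j)"
  have tj: "t j < k" "t j \<noteq> 0" using assms k2 unfolding t_def transpose_def by auto
  have "\<sigma> permutes {..<k}" unfolding \<sigma>_def t_def
    by (rule permutes_compose) (use assms k2 tj in \<open>auto simp: t_def intro!: permutes_swap_id\<close>)
  moreover have "\<sigma> 0 = i" using tj unfolding \<sigma>_def t_def by (simp add: transpose_def)
  moreover have "\<sigma> 1 = j" unfolding \<sigma>_def t_def by (simp add: transpose_def)
  ultimately show ?thesis using that by blast
qed

lemma triangle:
  assumes "v < n" "i < k" "j < k" "i \<noteq> j"
  shows "{v, (v + L!i) mod n, ((v + L!i) mod n + L!j) mod n} \<in> TT"
proof -
  obtain \<sigma> where s: "\<sigma> permutes {..<k}" "\<sigma> 0 = i" "\<sigma> 1 = j" using sigma2 assms by blast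
  have a: "v \<in> Delta n L v \<sigma>" using Delta_mem[of 0 v \<sigma>] k2 assms by (simp add: P_def)
  have b: "(v + L!i) mod n \<in> Delta n L v \<sigma>" using Delta_mem[of 1 v \<sigma>] k2 s by (simp add: P_def)
  have c: "((v + L!i) mod n + L!j) mod n \<in> Delta n L v \<sigma>"
  proof (cases "k = 2")
    case True
    have "{..<k} = {i, j}" using assms True by auto
    hence "n = L!i + L!j" using n_sum assms by simp
    hence "((v + L!i) mod n + L!j) mod n = v" using assms by (simp add: mod_add_left_eq add.assoc)
    then show ?thesis using a by simp
  next
    case False
    have "((v + L!i) mod n + L!j) mod n = (v + P \<sigma> 2) mod n"
      using s by (simp add: P_def numeral_2_eq_2 mod_add_left_eq add.assoc)
    then show ?thesis using Delta_mem[of 2 v \<sigma>] False k2 by simp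
  qed
  have sub: "{v, (v + L!i) mod n, ((v + L!i) mod n + L!j) mod n} \<subseteq> Delta n L v \<sigma>"
    using a b c by (simp only: insert_subset empty_subsetI simp_thms)
  show ?thesis by (rule sub_T[OF assms(1) s(1) sub]) simp
qed

lemma edge_step: assumes "v < n" "i < k" shows "{v, (v + L!i) mod n} \<in> TT"
proof -
  define j where "j = (if i = 0 then 1 else (0::nat))"
  have j: "j < k" "i \<noteq> j" using k2 unfolding j_def by auto
  have "{v, (v + L!i) mod n} \<subseteq> {v, (v + L!i) mod n, ((v + L!i) mod n + L!j) mod n}" by blast
  then show ?thesis using triangle[OF assms j] T_down by blast
qed

lemma vert_T: "v < n \<Longrightarrow> {v} \<in> TT"
  using edge_step[of v 0] k2 T_down by auto

lemma walk_edge_path: "v < n \<Longrightarrow> set ts \<subseteq> {..<k} \<Longrightarrow> edge_path TT (walk n L v ts)"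
proof (induction ts arbitrary: v)
  case Nil then show ?case using vert_T by (simp add: edge_path_def)
next
  case (Cons t ts)
  let ?w = "(v + L!t) mod n"
  have w: "?w < n" using n_pos by simp
  have IH: "edge_path TT (walk n L ?w ts)" using Cons w by simp
  have e: "{v, ?w} \<in> TT" using edge_step Cons by simp
  have hw: "walk n L ?w ts ! 0 = ?w" using walk_hd walk_ne by (simp add: hd_conv_nth)
  show ?case unfolding edge_path_def
  proof (intro conjI allI impI)
    show "walk n L v (t # ts) \<noteq> []" by simp
  next
    fix i assume "i < length (walk n L v (t # ts))"
    then show "{walk n L v (t # ts) ! i} \<in> TT" using IH Cons.prems vert_T
      by (cases i) (auto simp: edge_path_def)
  next
    fix i assume "i + 1 < length (walk n L v (t # ts))"
    then show "{walk n L v (t # ts) ! i, walk n L v (t # ts) ! (i + 1)} \<in> TT" using IH e hw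
      by (cases i) (auto simp: edge_path_def)
  qed
qed


lemma P_add: "P \<sigma> (p + m) = P \<sigma> p + (\<Sum>j<m. L!(\<sigma> (p + j)))"
  by (induction m) (auto simp: P_def)

lemma inDelta: "x < n \<Longrightarrow> \<sigma> permutes {..<k} \<Longrightarrow> m \<le> k \<Longrightarrow> (x + P \<sigma> m) mod n \<in> Delta n L x \<sigma>"
proof (cases "m = k")
  case True
  assume "x < n" "\<sigma> permutes {..<k}"
  hence "(x + P \<sigma> m) mod n = (x + P \<sigma> 0) mod n" using True P_perm by (simp add: P_def)
  then show ?thesis using Delta_mem[of 0 x \<sigma>] k2 by simp
next
  case False
  assume "m \<le> k" then show ?thesis using False Delta_mem by simp
qed

lemma blk_nth:
  assumes "x < n" "p \<le> q" "m \<le> q - p"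
  shows "walk n L ((x + P \<sigma> p) mod n) (map \<sigma> [p..<q]) ! m = (x + P \<sigma> (p + m)) mod n"
proof -
  have "walk n L ((x + P \<sigma> p) mod n) (map \<sigma> [p..<q]) ! m
      = ((x + P \<sigma> p) mod n + (\<Sum>j<m. L!(map \<sigma> [p..<q] ! j))) mod n"
    using assms n_pos by (simp add: walk_nth)
  also have "(\<Sum>j<m. L!(map \<sigma> [p..<q] ! j)) = (\<Sum>j<m. L!(\<sigma> (p + j)))"
    by (rule sum.cong) (use assms in auto)
  finally show ?thesis by (simp add: P_add mod_add_left_eq add.assoc)
qed

lemma blk_set:
  assumes "x < n" "\<sigma> permutes {..<k}" "p \<le> q" "q \<le> k"
  shows "set (walk n L ((x + P \<sigma> p) mod n) (map \<sigma> [p..<q])) \<subseteq> Delta n L x \<sigma>"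
proof
  fix y assume "y \<in> set (walk n L ((x + P \<sigma> p) mod n) (map \<sigma> [p..<q]))"
  then obtain m where m: "m < length (walk n L ((x + P \<sigma> p) mod n) (map \<sigma> [p..<q]))"
    "y = walk n L ((x + P \<sigma> p) mod n) (map \<sigma> [p..<q]) ! m" by (auto simp: in_set_conv_nth)
  hence "m \<le> q - p" by (simp add: walk_len)
  hence "y = (x + P \<sigma> (p + m)) mod n" using blk_nth assms m by simp
  then show "y \<in> Delta n L x \<sigma>" using inDelta assms \<open>m \<le> q - p\<close> by simp
qed

lemma blk_last:
  assumes "x < n" "p \<le> q"
  shows "last (walk n L ((x + P \<sigma> p) mod n) (map \<sigma> [p..<q])) = (x + P \<sigma> q) mod n"
  using blk_nth[OF assms, of "q - p" \<sigma>] assms walk_ne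
  by (simp add: last_conv_nth walk_len)

lemma contract2:
  assumes "S \<in> TT" "length xs \<ge> 2" "set xs \<subseteq> S"
  shows "hrel TT xs [hd xs, last xs]"
proof -
  have ne: "xs \<noteq> []" using assms(2) by auto
  have ne2: "tl xs \<noteq> []" using assms(2) by (cases xs) auto
  have e: "xs = hd xs # butlast (tl xs) @ [last xs]" using ne ne2 by (cases xs) auto
  have "hrel TT (hd xs # butlast (tl xs) @ [last xs]) [hd xs, last xs]"
    by (rule contract[where S=S]) (use T_down assms e in \<open>auto\<close>)
  thus ?thesis using e by simp
qed

lemma edge_walk:
  assumes "{u, w} \<in> TT"
  shows "\<exists>ts. set ts \<subseteq> {..<k} \<and> hrel TT [u, w] (walk n L u ts) \<and> last (walk n L u ts) = w"
proof -
  obtain x \<sigma> where x: "x < n" "\<sigma> permutes {..<k}" "{u, w} \<subseteq> Delta n L x \<sigma>"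
    using assms lenL unfolding tonnetz_def by (auto simp: atLeast0LessThan)
  obtain p where p: "p < k" "u = (x + P \<sigma> p) mod n" using x(3) lenL unfolding Delta_def P_def by auto
  obtain q where q: "q < k" "w = (x + P \<sigma> q) mod n" using x(3) lenL unfolding Delta_def P_def by auto
  have sk: "\<And>i. i < k \<Longrightarrow> \<sigma> i < k" using x(2) permutes_in_image by fastforce
  have D: "Delta n L x \<sigma> \<in> TT" using Delta_T x by simp
  consider "p = q" | "p < q" | "q < p" by linarith
  then show ?thesis
  proof cases
    case 1
    hence "elem_move TT [u, w] (walk n L u [])" using p q unfolding elem_move_def
      by (metis append.left_neutral append.right_neutral walk.simps(1))
    thus ?thesis using p q 1 by (intro exI[of _ "[]"]) auto
  next
    case 2
    let ?ts = "map \<sigma> [p..<q]"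
    have s: "set (walk n L u ?ts) \<subseteq> Delta n L x \<sigma>" using blk_set x 2 q p by simp
    have l: "last (walk n L u ?ts) = w" using blk_last x 2 p q by simp
    have "hrel TT (walk n L u ?ts) [u, w]" using contract2[OF D _ s] l walk_hd 2 by (simp add: walk_len)
    thus ?thesis using l sk q 2 hrel_sym by (intro exI[of _ ?ts]) auto
  next
    case 3
    let ?A = "map \<sigma> [p..<k]" and ?B = "map \<sigma> [0..<q]"
    have la: "last (walk n L u ?A) = x" using blk_last[OF x(1), of p k \<sigma>] p P_perm x by simp
    have e: "walk n L u (?A @ ?B) = butlast (walk n L u ?A) @ walk n L x ?B"
      using walk_append la by simp
    have sA: "set (walk n L u ?A) \<subseteq> Delta n L x \<sigma>" using blk_set[OF x(1,2), of p k] p by simp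
    have sB: "set (walk n L x ?B) \<subseteq> Delta n L x \<sigma>" using blk_set[OF x(1,2), of 0 q] q x(1) by (simp add: P_def)
    have s: "set (walk n L u (?A @ ?B)) \<subseteq> Delta n L x \<sigma>" unfolding e using sA sB
      by (auto dest: in_set_butlastD)
    have l: "last (walk n L u (?A @ ?B)) = w"
      using blk_last[OF x(1), of 0 q \<sigma>] q x(1) walk_ne by (simp add: walk_append la P_def)
    have "hrel TT (walk n L u (?A @ ?B)) [u, w]" using contract2[OF D _ s] l walk_hd 3 p(1) by (simp add: walk_len)
    thus ?thesis using l sk q p hrel_sym by (intro exI[of _ "?A @ ?B"]) auto
  qed
qed


definition canon :: "(nat \<Rightarrow> nat) \<Rightarrow> nat list" where
  "canon c = concat (map (\<lambda>i. replicate (c i) i) [0..<k])"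

definition cnt :: "nat list \<Rightarrow> nat list" where "cnt ts = map (count_list ts) [0..<k]"

lemma E_canon: "E_path n L v ps = walk n L v (canon (\<lambda>i. ps!i))"
  unfolding E_path_def canon_def using lenL by simp

lemma canon_cong: "(\<And>i. i < k \<Longrightarrow> c i = c' i) \<Longrightarrow> canon c = canon c'"
  unfolding canon_def by (rule arg_cong[where f=concat]) auto

lemma canon_set: "set (canon c) \<subseteq> {..<k}" unfolding canon_def using cnc_set by blast

lemma canon_count: "count_list (canon c) x = (if x < k then c x else 0)"
  unfolding canon_def by (rule cnc_count)

lemma sort_canon: assumes "set ts \<subseteq> {..<k}" shows "sort ts = canon (count_list ts)"
proof (rule properties_for_sort)
  show "mset (canon (count_list ts)) = mset ts"
    using assms by (auto simp: multiset_eq_iff count_mset canon_count count_list_0_iff)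
  show "sorted (canon (count_list ts))" unfolding canon_def by (rule cnc_sorted)
qed

lemma E_cnt: assumes "set ts \<subseteq> {..<k}" shows "E_path n L v (cnt ts) = walk n L v (sort ts)"
  unfolding E_canon sort_canon[OF assms] cnt_def by (rule arg_cong[where f="walk n L v"], rule canon_cong) simp

lemma swap_walk:
  assumes "v < n" "i < k" "j < k" "i \<noteq> j"
  shows "hrel TT (walk n L v (i # j # rest)) (walk n L v (j # i # rest))"
proof -
  let ?a = "(v + L!i) mod n" and ?a' = "(v + L!j) mod n"
  let ?b = "(?a + L!j) mod n"
  have bb: "(?a' + L!i) mod n = ?b" by (simp only: mod_add_left_eq) (simp add: add_ac)
  obtain R where R: "walk n L ?b rest = ?b # R" by (cases rest) auto
  have e1: "walk n L v (i # j # rest) = [] @ [v, ?a, ?b] @ R" using R by simp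
  have e2: "walk n L v (j # i # rest) = [] @ [v, ?a', ?b] @ R" using R bb by simp
  have t1: "{v, ?a, ?b} \<in> TT" using triangle assms by simp
  have t2: "{v, ?a', ?b} \<in> TT" using triangle[of v j i] assms bb by simp
  have m1: "elem_move TT (walk n L v (i # j # rest)) ([] @ [v, ?b] @ R)"
    unfolding e1 elem_move_def using t1 by blast
  have m2: "elem_move TT (walk n L v (j # i # rest)) ([] @ [v, ?b] @ R)"
    unfolding e2 elem_move_def using t2 by blast
  show ?thesis using hrel_step[OF m1] hrel_sym[OF hrel_step[OF m2]] hrel_trans by blast
qed

lemma insort_walk: "v < n \<Longrightarrow> set (t # xs) \<subseteq> {..<k} \<Longrightarrow> hrel TT (walk n L v (t # xs)) (walk n L v (insort t xs))"
proof (induction xs arbitrary: v)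
  case Nil then show ?case by simp
next
  case (Cons y xs)
  show ?case
  proof (cases "t \<le> y")
    case True then show ?thesis by simp
  next
    case False
    let ?w = "(v + L!y) mod n"
    have "hrel TT (walk n L v (t # y # xs)) (walk n L v (y # t # xs))"
      using swap_walk Cons.prems False by simp
    moreover have "hrel TT (walk n L ?w (t # xs)) (walk n L ?w (insort t xs))"
      using Cons n_pos by simp
    hence "hrel TT (walk n L v (y # t # xs)) (walk n L v (y # insort t xs))"
      using hrel_cons by simp
    ultimately show ?thesis using False hrel_trans by simp
  qed
qed

lemma sort_walk: "v < n \<Longrightarrow> set ts \<subseteq> {..<k} \<Longrightarrow> hrel TT (walk n L v ts) (walk n L v (sort ts))"
proof (induction ts arbitrary: v)
  case Nil then show ?case by simp
next
  case (Cons t ts)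
  let ?w = "(v + L!t) mod n"
  have "hrel TT (walk n L ?w ts) (walk n L ?w (sort ts))" using Cons n_pos by simp
  hence "hrel TT (walk n L v (t # ts)) (walk n L v (t # sort ts))" using hrel_cons by simp
  moreover have "hrel TT (walk n L v (t # sort ts)) (walk n L v (insort t (sort ts)))"
    using insort_walk Cons.prems by simp
  ultimately show ?case using hrel_trans by simp
qed

lemma sum_cnt: "set ts \<subseteq> {..<k} \<Longrightarrow> (\<Sum>i<k. cnt ts ! i * L!i) = sum_list (map ((!) L) ts)"
  unfolding cnt_def using sum_list_map_eq_sum_count2[of ts "{..<k}" "(!) L"] by simp

lemma closed_walk:
  assumes "v0 < n" "set ts \<subseteq> {..<k}" "last (walk n L v0 ts) = v0"
  shows "hrel TT (walk n L v0 ts) (E_path n L v0 (cnt ts)) \<and> admissible n L (cnt ts)"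
proof
  show "hrel TT (walk n L v0 ts) (E_path n L v0 (cnt ts))" using sort_walk E_cnt assms by simp
  have "(v0 + sum_list (map ((!) L) ts)) mod n = v0" using walk_last assms by simp
  hence "sum_list (map ((!) L) ts) mod n = 0" using mod_back assms by blast
  thus "admissible n L (cnt ts)" unfolding admissible_def using sum_cnt assms lenL by (simp add: cnt_def)
qed

lemma path_to_walk: "edge_path TT p \<Longrightarrow> \<exists>ts. set ts \<subseteq> {..<k} \<and> hrel TT p (walk n L (hd p) ts)"
proof (induction p)
  case Nil then show ?case by (simp add: edge_path_def)
next
  case (Cons u p)
  show ?case
  proof (cases p)
    case Nil then show ?thesis by (intro exI[of _ "[]"]) simp
  next
    case (Cons w rest)
    have A: "\<forall>i<length (u#p). {(u#p)!i} \<in> TT" and B: "\<forall>i. i+1 < length (u#p) \<longrightarrow> {(u#p)!i, (u#p)!(i+1)} \<in> TT"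
      using Cons.prems unfolding edge_path_def by auto
    have ep: "edge_path TT p" unfolding edge_path_def
    proof (intro conjI allI impI)
      show "p \<noteq> []" using \<open>p = w # rest\<close> by simp
      fix i
      show "i < length p \<Longrightarrow> {p ! i} \<in> TT" using A[rule_format, of "Suc i"] by simp
      show "i + 1 < length p \<Longrightarrow> {p ! i, p ! (i + 1)} \<in> TT" using B[rule_format, of "Suc i"] by simp
    qed
    then obtain ts where ts: "set ts \<subseteq> {..<k}" "hrel TT p (walk n L w ts)" using Cons.IH \<open>p = w # rest\<close> by auto
    have "{u, w} \<in> TT" using Cons.prems \<open>p = w # rest\<close> unfolding edge_path_def by force
    then obtain ts0 where ts0: "set ts0 \<subseteq> {..<k}" "hrel TT [u, w] (walk n L u ts0)" "last (walk n L u ts0) = w"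
      using edge_walk by blast
    obtain R where R: "walk n L w ts = w # R" by (cases ts) auto
    have h1: "hrel TT (u # p) (u # walk n L w ts)" using ts hrel_cons by blast
    have h2: "hrel TT ([u, w] @ R) (walk n L u ts0 @ R)" using ts0 hrel_appr by blast
    have "walk n L u (ts0 @ ts) = butlast (walk n L u ts0) @ walk n L w ts" using walk_append ts0 by simp
    also have "\<dots> = walk n L u ts0 @ R" using R ts0(3) walk_ne
      by (metis append.assoc append_butlast_last_id append_Cons append_Nil)
    finally have "hrel TT (u # p) (walk n L u (ts0 @ ts))" using h1 h2 R hrel_trans by auto
    then show ?thesis using ts ts0 by (intro exI[of _ "ts0 @ ts"]) auto
  qed
qed

lemma part1:
  assumes "v0 < n" "closed_edge_path TT v0 p"
  shows "\<exists>ps. admissible n L ps \<and> edge_homotopic TT p (E_path n L v0 ps)"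
proof -
  have ep: "edge_path TT p" "hd p = v0" "last p = v0" using assms unfolding closed_edge_path_def by auto
  obtain ts where ts: "set ts \<subseteq> {..<k}" "hrel TT p (walk n L v0 ts)" using path_to_walk ep by metis
  have "last (walk n L v0 ts) = v0" using hrel_last[OF ts(2)] ep edge_path_def by auto
  hence c: "hrel TT (walk n L v0 ts) (E_path n L v0 (cnt ts)) \<and> admissible n L (cnt ts)"
    using closed_walk assms ts by blast
  have "edge_path TT (E_path n L v0 (cnt ts))" using E_cnt ts walk_edge_path assms by simp
  thus ?thesis using c ts ep unfolding edge_homotopic_def using hrel_trans by blast
qed


abbreviation hom where "hom z z' \<equiv> homologous n TT z z'"

lemma bd2_add: "bd2 n (\<lambda>t. c1 t + c2 t) e = bd2 n c1 e + bd2 n c2 e"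
  by (cases e) (simp add: bd2_def sum.distrib[symmetric] algebra_simps)
lemma bd2_scale: "bd2 n (\<lambda>t. m * c t) e = m * bd2 n c e"
  by (cases e) (simp add: bd2_def sum_distrib_left algebra_simps)
lemma bd2_zero: "bd2 n (\<lambda>t. 0) e = 0"
  by (cases e) (simp add: bd2_def)

lemma hom_refl: "hom z z"
  unfolding homologous_def by (rule exI[of _ "\<lambda>t. 0"]) (simp add: chain2_def bd2_zero)

lemma hom_scale: "hom z z' \<Longrightarrow> hom (\<lambda>e. m * z e) (\<lambda>e. m * z' e)"
  unfolding homologous_def
proof (elim exE conjE)
  fix c assume c: "chain2 TT c" "\<forall>e. z e - z' e = bd2 n c e"
  show "\<exists>c. chain2 TT c \<and> (\<forall>e. m * z e - m * z' e = bd2 n c e)"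
    by (rule exI[of _ "\<lambda>t. m * c t"]) (use c in \<open>auto simp: chain2_def bd2_scale right_diff_distrib[symmetric]\<close>)
qed

lemma hom_sym: "hom z z' \<Longrightarrow> hom z' z"
proof -
  assume "hom z z'"
  hence "hom (\<lambda>e. -1 * z e) (\<lambda>e. -1 * z' e)" by (rule hom_scale)
  then obtain c where c: "chain2 TT c" "\<forall>e. -1 * z e - -1 * z' e = bd2 n c e" unfolding homologous_def by blast
  show ?thesis unfolding homologous_def using c by (intro exI[of _ c]) auto
qed

lemma hom_add: "hom a b \<Longrightarrow> hom c d \<Longrightarrow> hom (\<lambda>e. a e + c e) (\<lambda>e. b e + d e)"
  unfolding homologous_def
proof (elim exE conjE)
  fix c1 c2 assume c: "chain2 TT c1" "\<forall>e. a e - b e = bd2 n c1 e" "chain2 TT c2" "\<forall>e. c e - d e = bd2 n c2 e"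
  show "\<exists>cc. chain2 TT cc \<and> (\<forall>e. a e + c e - (b e + d e) = bd2 n cc e)"
  proof (rule exI[of _ "\<lambda>t. c1 t + c2 t"], intro conjI allI)
    show "chain2 TT (\<lambda>t. c1 t + c2 t)" unfolding chain2_def
    proof (intro allI impI)
      fix x y w assume "c1 (x, y, w) + c2 (x, y, w) \<noteq> 0"
      hence "c1 (x, y, w) \<noteq> 0 \<or> c2 (x, y, w) \<noteq> 0" by auto
      thus "{x, y, w} \<in> TT" using c(1) c(3) unfolding chain2_def by blast
    qed
    fix e
    have "a e - b e = bd2 n c1 e" by (rule c(2)[rule_format])
    moreover have "c e - d e = bd2 n c2 e" by (rule c(4)[rule_format])
    moreover have "bd2 n (\<lambda>t. c1 t + c2 t) e = bd2 n c1 e + bd2 n c2 e" by (rule bd2_add)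
    ultimately show "a e + c e - (b e + d e) = bd2 n (\<lambda>t. c1 t + c2 t) e" by linarith
  qed
qed

lemma hom_trans: "hom a b \<Longrightarrow> hom b c \<Longrightarrow> hom a c"
proof -
  assume h: "hom a b" "hom b c"
  have "hom (\<lambda>e. a e + b e) (\<lambda>e. b e + c e)" using hom_add[OF h] .
  then obtain cc where cc: "chain2 TT cc" "\<forall>e. a e + b e - (b e + c e) = bd2 n cc e"
    unfolding homologous_def by blast
  thus ?thesis unfolding homologous_def by auto
qed

lemma hom_sum: "finite A \<Longrightarrow> (\<And>i. i \<in> A \<Longrightarrow> hom (f i) (g i)) \<Longrightarrow> hom (\<lambda>e. \<Sum>i\<in>A. f i e) (\<lambda>e. \<Sum>i\<in>A. g i e)"
proof (induction A rule: finite_induct)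
  case empty then show ?case using hom_refl by simp
next
  case (insert x F)
  have "hom (\<lambda>e. f x e + (\<Sum>i\<in>F. f i e)) (\<lambda>e. g x e + (\<Sum>i\<in>F. g i e))"
    using hom_add insert by simp
  then show ?case using insert by simp
qed

lemma hom_eq: "hom a b \<Longrightarrow> (\<And>e. a e = a' e) \<Longrightarrow> (\<And>e. b e = b' e) \<Longrightarrow> hom a' b'"
proof -
  assume "hom a b" "\<And>e. a e = a' e" "\<And>e. b e = b' e"
  moreover hence "a = a'" "b = b'" by auto
  ultimately show ?thesis by simp
qed

lemma sum_ind: "(\<Sum>x<n. if x = u \<and> Q then 1 else 0 :: int) = (if Q \<and> u < n then 1 else 0)"
  by (cases Q) auto

lemma bd2_delta3:
  assumes "u < n" "v < n" "w < n"
  shows "bd2 n (\<lambda>t. if t = (u, v, w) then 1 else 0) e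
       = (if e = (v, w) then 1 else 0) - (if e = (u, w) then 1 else 0) + (if e = (u, v) then 1 else 0)"
proof (cases e)
  case (Pair a b)
  have "bd2 n (\<lambda>t. if t = (u, v, w) then 1 else 0) (a, b)
     = (\<Sum>x<n. if x = u \<and> (a = v \<and> b = w) then 1 else 0) - (\<Sum>x<n. if x = v \<and> (a = u \<and> b = w) then 1 else 0)
       + (\<Sum>x<n. if x = w \<and> (a = u \<and> b = v) then 1 else 0)"
    unfolding bd2_def by (simp add: sum.distrib sum_subtractf) (intro arg_cong2[where f="(+)"] arg_cong2[where f="(-)"] sum.cong; auto)
  then show ?thesis using Pair assms by (simp only: sum_ind) auto
qed

lemma em_set: "elem_move TT a b \<Longrightarrow> (set a \<subseteq> {..<n}) = (set b \<subseteq> {..<n})"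
  unfolding elem_move_def
  by (elim disjE exE conjE) (use T_lt in auto)

lemma em_hom: "elem_move TT a b \<Longrightarrow> set a \<subseteq> {..<n} \<Longrightarrow> hom (path_chain a) (path_chain b)"
  unfolding elem_move_def
proof (elim disjE exE conjE)
  fix xs ys u v w
  assume a: "a = xs @ [u, v, w] @ ys" "b = xs @ [u, w] @ ys" "{u, v, w} \<in> TT"
  have uvw: "u < n" "v < n" "w < n" using a(3) T_lt by auto
  have "\<And>e. path_chain a e - path_chain b e = bd2 n (\<lambda>t. if t = (u, v, w) then 1 else 0) e"
  proof -
    fix e
    have "path_chain a e = path_chain (xs @ [u]) e + path_chain (u # v # w # ys) e"
      using pc_glue[of xs u e "v # w # ys"] a by simp
    moreover have "path_chain b e = path_chain (xs @ [u]) e + path_chain (u # w # ys) e"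
      using pc_glue[of xs u e "w # ys"] a by simp
    ultimately show "path_chain a e - path_chain b e = bd2 n (\<lambda>t. if t = (u, v, w) then 1 else 0) e"
      using bd2_delta3[OF uvw] by (simp add: pc_cons2)
  qed
  moreover have "chain2 TT (\<lambda>t. if t = (u, v, w) then 1 else 0)" using a(3) by (simp add: chain2_def)
  ultimately show ?thesis unfolding homologous_def by blast
next
  fix xs ys u
  assume a: "a = xs @ [u, u] @ ys" "b = xs @ [u] @ ys" "set a \<subseteq> {..<n}"
  have u: "u < n" using a by auto
  have "\<And>e. path_chain a e - path_chain b e = bd2 n (\<lambda>t. if t = (u, u, u) then 1 else 0) e"
  proof -
    fix e
    have "path_chain a e = path_chain (xs @ [u]) e + path_chain (u # u # ys) e"
      using pc_glue[of xs u e "u # ys"] a by simp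
    moreover have "path_chain b e = path_chain (xs @ [u]) e + path_chain (u # ys) e"
      using pc_glue[of xs u e "ys"] a by simp
    ultimately show "path_chain a e - path_chain b e = bd2 n (\<lambda>t. if t = (u, u, u) then 1 else 0) e"
      using bd2_delta3[OF u u u] by (simp add: pc_cons2)
  qed
  moreover have "chain2 TT (\<lambda>t. if t = (u, u, u) then 1 else 0)" using vert_T u by (simp add: chain2_def)
  ultimately show ?thesis unfolding homologous_def by blast
qed

lemma hrel_hom: "hrel TT p q \<Longrightarrow> set p \<subseteq> {..<n} \<Longrightarrow> hom (path_chain p) (path_chain q) \<and> set q \<subseteq> {..<n}"
proof (induction rule: rtranclp_induct)
  case base then show ?case using hom_refl by simp
next
  case (step y z)
  have y: "hom (path_chain p) (path_chain y)" "set y \<subseteq> {..<n}" using step by auto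
  show ?case
  proof (cases "elem_move TT y z")
    case True then show ?thesis using y em_hom em_set hom_trans by blast
  next
    case False
    hence m: "elem_move TT z y" using step by blast
    hence "set z \<subseteq> {..<n}" using em_set y by blast
    then show ?thesis using y em_hom[OF m] hom_sym hom_trans by blast
  qed
qed


definition inG :: "nat \<Rightarrow> (nat \<times> nat \<Rightarrow> int) \<Rightarrow> bool" where
  "inG v0 x \<longleftrightarrow> (\<exists>ps. admissible n L ps \<and> hom x (path_chain (E_path n L v0 ps)))"

lemma pc_walk_append:
  assumes "v < n"
  shows "path_chain (walk n L v (a @ b)) e = path_chain (walk n L v a) e + path_chain (walk n L (last (walk n L v a)) b) e"
proof -
  let ?W = "walk n L v a" and ?w = "last (walk n L v a)"
  obtain R where R: "walk n L ?w b = ?w # R" by (cases b) auto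
  have W: "?W = butlast ?W @ [?w]" using walk_ne by simp
  have "walk n L v (a @ b) = butlast ?W @ ?w # R" using walk_append R by simp
  thus ?thesis using pc_glue[of "butlast ?W" ?w e R] W R by simp
qed

lemma sum_canon: "sum_list (map ((!) L) (canon c)) = (\<Sum>i<k. c i * L!i)"
  using sum_list_map_eq_sum_count2[of "canon c" "{..<k}" "(!) L"] canon_set
  by (simp add: canon_count)

lemma E_closed: assumes "v0 < n" "admissible n L ps" shows "last (E_path n L v0 ps) = v0"
proof -
  have "last (E_path n L v0 ps) = (v0 + (\<Sum>i<k. ps!i * L!i)) mod n"
    unfolding E_canon using walk_last assms sum_canon by simp
  also have "\<dots> = (v0 + (\<Sum>i<k. ps!i * L!i) mod n) mod n" by (rule mod_add_right_eq[symmetric])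
  also have "\<dots> = v0" using assms lenL unfolding admissible_def by simp
  finally show ?thesis .
qed

lemma G_closed_walk:
  assumes "v0 < n" "set ts \<subseteq> {..<k}" "last (walk n L v0 ts) = v0"
  shows "inG v0 (path_chain (walk n L v0 ts))"
  using closed_walk[OF assms] hrel_hom walk_set assms unfolding inG_def by blast

lemma G_hom: "hom x y \<Longrightarrow> inG v0 y \<Longrightarrow> inG v0 x"
  unfolding inG_def using hom_trans by blast

lemma G_E: "admissible n L ps \<Longrightarrow> inG v0 (path_chain (E_path n L v0 ps))"
  unfolding inG_def using hom_refl by blast

lemma E_sum:
  assumes "v0 < n" "admissible n L ps" "admissible n L ps'"
  shows "path_chain (E_path n L v0 ps) e + path_chain (E_path n L v0 ps') e
       = path_chain (walk n L v0 (canon (\<lambda>i. ps!i) @ canon (\<lambda>i. ps'!i))) e"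
  using pc_walk_append[OF assms(1)] E_closed[OF assms(1,2)] by (simp add: E_canon)

lemma G_add: assumes "v0 < n" "inG v0 x" "inG v0 y" shows "inG v0 (\<lambda>e. x e + y e)"
proof -
  obtain ps ps' where p: "admissible n L ps" "hom x (path_chain (E_path n L v0 ps))"
    "admissible n L ps'" "hom y (path_chain (E_path n L v0 ps'))" using assms unfolding inG_def by blast
  have h: "hom (\<lambda>e. x e + y e) (path_chain (walk n L v0 (canon (\<lambda>i. ps!i) @ canon (\<lambda>i. ps'!i))))"
    using hom_add[OF p(2) p(4)] E_sum[OF assms(1) p(1) p(3)] by simp
  have "last (walk n L v0 (canon (\<lambda>i. ps!i) @ canon (\<lambda>i. ps'!i))) = v0"
    using E_closed[OF assms(1) p(1)] E_closed[OF assms(1) p(3)] walk_append walk_ne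
    by (simp add: E_canon)
  hence "inG v0 (path_chain (walk n L v0 (canon (\<lambda>i. ps!i) @ canon (\<lambda>i. ps'!i))))"
    using G_closed_walk assms canon_set by simp
  thus ?thesis using G_hom h by blast
qed

lemma canon_zero: "canon (\<lambda>i. 0) = []" unfolding canon_def by simp

lemma G_zero: "v0 < n \<Longrightarrow> inG v0 (\<lambda>e. 0)"
proof -
  assume v: "v0 < n"
  have a: "admissible n L (replicate k 0)" unfolding admissible_def using lenL by simp
  have "E_path n L v0 (replicate k 0) = [v0]" unfolding E_canon
    using canon_cong[of "\<lambda>i. replicate k 0 ! i" "\<lambda>i. 0"] canon_zero by simp
  hence "path_chain (E_path n L v0 (replicate k 0)) = (\<lambda>e. 0)" using pc_single by auto
  thus ?thesis using G_E[OF a, of v0] by simp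
qed

lemma round_null: "v < n \<Longrightarrow> hrel TT (walk n L v (concat (replicate N [0..<k]))) [v]"
proof (induction N)
  case 0 then show ?case by simp
next
  case (Suc N)
  let ?W = "walk n L v [0..<k]"
  have idp: "id permutes {..<k}" by (simp add: permutes_id)
  have e: "?W = walk n L ((v + P id 0) mod n) (map id [0..<k])" using Suc by (simp add: P_def)
  have s: "set ?W \<subseteq> Delta n L v id" using blk_set[OF Suc.prems idp, of 0 k] e by simp
  have l: "last ?W = v" using blk_last[OF Suc.prems, of 0 k id] e P_perm[OF idp] Suc.prems by simp
  have "hrel TT ?W [v, v]" using contract2[OF Delta_T[OF Suc.prems idp] _ s] l walk_hd k2 by (simp add: walk_len)
  moreover have "elem_move TT [v, v] [v]" unfolding elem_move_def by (metis append.left_neutral append_Nil2)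
  ultimately have h: "hrel TT ?W [v]" using hrel_step hrel_trans by blast
  obtain R where R: "walk n L v (concat (replicate N [0..<k])) = v # R"
    by (cases "concat (replicate N [0..<k])") auto
  have "walk n L v (concat (replicate (Suc N) [0..<k])) = butlast ?W @ walk n L v (concat (replicate N [0..<k]))"
    using walk_append l by simp
  also have "\<dots> = ?W @ R" using R l walk_ne by (metis append.assoc append_Cons append_Nil append_butlast_last_id)
  finally have "hrel TT (walk n L v (concat (replicate (Suc N) [0..<k]))) ([v] @ R)"
    using hrel_appr[OF h] by simp
  then show ?case using Suc R hrel_trans by simp
qed

lemma cnt_round: "cnt (concat (replicate N [0..<k])) = replicate k N"
proof -
  have c: "count_list (concat (replicate N [0..<k])) i = (if i < k then N else 0)" for i
    by (induction N) (auto simp: count_upt)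
  show ?thesis unfolding cnt_def by (rule nth_equalityI) (auto simp: c)
qed

lemma E_null: assumes "v0 < n" shows "hom (path_chain (E_path n L v0 (replicate k N))) (\<lambda>e. 0)"
proof -
  let ?ts = "concat (replicate N [0..<k])"
  have s: "set ?ts \<subseteq> {..<k}" by auto
  have h1: "hrel TT (walk n L v0 ?ts) [v0]" using round_null assms by simp
  hence "last (walk n L v0 ?ts) = v0" using hrel_last walk_ne by fastforce
  hence h2: "hrel TT (walk n L v0 ?ts) (E_path n L v0 (replicate k N))" using closed_walk[OF assms s] cnt_round by simp
  have "hrel TT (E_path n L v0 (replicate k N)) [v0]" using h1 h2 hrel_sym hrel_trans by blast
  moreover have "set (E_path n L v0 (replicate k N)) \<subseteq> {..<n}" unfolding E_canon using walk_set assms by simp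
  ultimately have "hom (path_chain (E_path n L v0 (replicate k N))) (path_chain [v0])" using hrel_hom by blast
  thus ?thesis using pc_single hom_eq by (metis (no_types))
qed

lemma G_neg: assumes "v0 < n" "inG v0 x" shows "inG v0 (\<lambda>e. - x e)"
proof -
  obtain ps where p: "admissible n L ps" "hom x (path_chain (E_path n L v0 ps))" using assms unfolding inG_def by blast
  define N where "N = sum_list ps"
  define qs where "qs = map (\<lambda>i. N - ps!i) [0..<k]"
  have le: "i < k \<Longrightarrow> ps!i \<le> N" for i using p(1) unfolding N_def admissible_def
    by (simp add: elem_le_sum_list lenL)
  have "(\<Sum>i<k. qs!i * L!i) + (\<Sum>i<k. ps!i * L!i) = (\<Sum>i<k. N * L!i)"
    unfolding sum.distrib[symmetric] qs_def by (rule sum.cong) (auto simp: le add_mult_distrib[symmetric])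
  also have "\<dots> = N * n" using n_sum by (simp add: sum_distrib_left)
  finally have f0: "((\<Sum>i<k. qs!i * L!i) + (\<Sum>i<k. ps!i * L!i)) mod n = 0" by simp
  have Y0: "(\<Sum>i<k. ps!i * L!i) mod n = 0" using p(1) lenL unfolding admissible_def by simp
  have "((\<Sum>i<k. qs!i * L!i) + (\<Sum>i<k. ps!i * L!i)) mod n = ((\<Sum>i<k. qs!i * L!i) + (\<Sum>i<k. ps!i * L!i) mod n) mod n"
    by (rule mod_add_right_eq[symmetric])
  hence "(\<Sum>i<k. qs!i * L!i) mod n = 0" using f0 Y0 by simp
  moreover have "length qs = k" unfolding qs_def by simp
  ultimately have aq: "admissible n L qs" using lenL unfolding admissible_def by simp
  have "cnt (canon (\<lambda>i. qs!i) @ canon (\<lambda>i. ps!i)) = replicate k N"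
    unfolding cnt_def by (rule nth_equalityI) (auto simp: canon_count qs_def le)
  moreover have cl: "last (walk n L v0 (canon (\<lambda>i. qs!i) @ canon (\<lambda>i. ps!i))) = v0"
    using E_closed[OF assms(1) aq] E_closed[OF assms(1) p(1)] walk_append walk_ne
    by (simp add: E_canon)
  ultimately have "hrel TT (walk n L v0 (canon (\<lambda>i. qs!i) @ canon (\<lambda>i. ps!i))) (E_path n L v0 (replicate k N))"
    using closed_walk[OF assms(1) _ cl] canon_set by simp
  hence "hom (path_chain (walk n L v0 (canon (\<lambda>i. qs!i) @ canon (\<lambda>i. ps!i)))) (path_chain (E_path n L v0 (replicate k N)))"
    using hrel_hom walk_set assms by blast
  hence h0: "hom (\<lambda>e. path_chain (E_path n L v0 qs) e + path_chain (E_path n L v0 ps) e) (\<lambda>e. 0)"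
    using E_null[OF assms(1)] hom_trans E_sum[OF assms(1) aq p(1)] by simp
  have "hom (\<lambda>e. (path_chain (E_path n L v0 qs) e + path_chain (E_path n L v0 ps) e) + - path_chain (E_path n L v0 ps) e)
             (\<lambda>e. 0 + - path_chain (E_path n L v0 ps) e)"
    by (rule hom_add[OF h0 hom_refl])
  hence h: "hom (path_chain (E_path n L v0 qs)) (\<lambda>e. - path_chain (E_path n L v0 ps) e)"
    by (rule hom_eq) auto
  have "hom (\<lambda>e. -1 * x e) (\<lambda>e. -1 * path_chain (E_path n L v0 ps) e)" using hom_scale[OF p(2), of "-1"] .
  hence "hom (\<lambda>e. - x e) (\<lambda>e. - path_chain (E_path n L v0 ps) e)" by (rule hom_eq) auto
  thus ?thesis using h hom_sym hom_trans aq unfolding inG_def by blast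
qed

lemma G_sum: assumes v: "v0 < n"
  shows "finite A \<Longrightarrow> (\<And>i. i \<in> A \<Longrightarrow> inG v0 (f i)) \<Longrightarrow> inG v0 (\<lambda>e. \<Sum>i\<in>A. f i e)"
proof (induction A rule: finite_induct)
  case empty then show ?case using G_zero v by simp
next
  case (insert x F)
  have "inG v0 (\<lambda>e. f x e + (\<Sum>i\<in>F. f i e))"
    by (rule G_add[OF v]) (use insert in auto)
  then show ?case using insert by simp
qed

lemma G_scale_nat: assumes "v0 < n" "inG v0 x" shows "inG v0 (\<lambda>e. int m * x e)"
proof (induction m)
  case 0 then show ?case using G_zero assms by simp
next
  case (Suc m)
  have "inG v0 (\<lambda>e. x e + int m * x e)" by (rule G_add[OF assms Suc])
  then show ?case by (simp add: algebra_simps)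
qed

lemma G_scale: assumes "v0 < n" "inG v0 x" shows "inG v0 (\<lambda>e. m * x e)"
proof (cases "m \<ge> 0")
  case True
  then show ?thesis using G_scale_nat[OF assms, of "nat m"] by simp
next
  case False
  have "inG v0 (\<lambda>e. - (int (nat (-m)) * x e))" using G_neg G_scale_nat assms by blast
  then show ?thesis using False by simp
qed


lemma connect:
  assumes "reduced L" "a < n" "b < n"
  shows "\<exists>ts. set ts \<subseteq> {..<k} \<and> last (walk n L a ts) = b"
proof -
  obtain \<beta> where b1: "(\<Sum>i<k. \<beta> i * int (L!i)) = 1"
    using bez_list[of L] assms(1) lenL unfolding reduced_def by auto
  define d where "d = int b - int a"
  define c where "c = (\<lambda>i. nat ((d * \<beta> i) mod int n))"
  have np: "int n > 0" using n_pos by simp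
  have ci: "int (c i) = (d * \<beta> i) mod int n" for i unfolding c_def using np by simp
  have "int (\<Sum>i<k. c i * L!i) mod int n = (\<Sum>i<k. ((d * \<beta> i) mod int n) * int (L!i)) mod int n"
    by (simp add: ci of_nat_sum)
  also have "\<dots> = (\<Sum>i<k. (((d * \<beta> i) mod int n) * int (L!i)) mod int n) mod int n"
    by (rule mod_sum_eq[symmetric])
  also have "\<dots> = (\<Sum>i<k. ((d * \<beta> i) * int (L!i)) mod int n) mod int n"
    by (simp add: mod_mult_left_eq)
  also have "\<dots> = (\<Sum>i<k. (d * \<beta> i) * int (L!i)) mod int n"
    by (rule mod_sum_eq)
  also have "(\<Sum>i<k. (d * \<beta> i) * int (L!i)) = d" using b1 by (simp add: sum_distrib_left[symmetric] mult.assoc)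
  finally have S: "int (\<Sum>i<k. c i * L!i) mod int n = d mod int n" .
  have "int (last (walk n L a (canon c))) = int ((a + (\<Sum>i<k. c i * L!i)) mod n)"
    using walk_last assms sum_canon by simp
  also have "\<dots> = (int a + int (\<Sum>i<k. c i * L!i)) mod int n" by (simp add: zmod_int)
  also have "\<dots> = (int a + d) mod int n" using S by (metis mod_add_right_eq)
  also have "\<dots> = int b" using assms unfolding d_def by simp
  finally show ?thesis using canon_set by (intro exI[of _ "canon c"]) auto
qed

lemma chain1_lt: "chain1 TT z \<Longrightarrow> z (a, b) \<noteq> 0 \<Longrightarrow> a < n \<and> b < n"
  unfolding chain1_def using T_lt by blast

lemma pc_edge: "path_chain [a, b] e = (if e = (a, b) then 1 else 0)"
  by (simp add: pc_cons2 pc_single)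

lemma part2:
  assumes "reduced L" "v0 < n" "cycle1 n TT z"
  shows "inG v0 z"
proof -
  have ch: "chain1 TT z" and bd: "\<And>v. bd1 n z v = 0" using assms(3) unfolding cycle1_def by auto
  have "\<forall>y. \<exists>g. y < n \<longrightarrow> set g \<subseteq> {..<k} \<and> last (walk n L v0 g) = y" using connect assms by blast
  then obtain g where g: "\<And>y. y < n \<Longrightarrow> set (g y) \<subseteq> {..<k} \<and> last (walk n L v0 (g y)) = y" by metis
  have "\<forall>y. \<exists>r. y < n \<longrightarrow> set r \<subseteq> {..<k} \<and> last (walk n L y r) = v0" using connect assms by blast
  then obtain r where r: "\<And>y. y < n \<Longrightarrow> set (r y) \<subseteq> {..<k} \<and> last (walk n L y (r y)) = v0" by metis
  define Tr where "Tr = (\<lambda>y. path_chain (walk n L v0 (g y)))"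
  define D where "D = (\<lambda>(a::nat) (b::nat) (e::nat \<times> nat). (if e = (a, b) then 1 else 0 :: int))"
  define F where "F = (\<lambda>a b e. z (a, b) * (Tr a e + D a b e - Tr b e))"
  have zdec: "z e = (\<Sum>a<n. \<Sum>b<n. z (a, b) * D a b e)" for e
  proof (cases e)
    case (Pair c d)
    show ?thesis
    proof (cases "c < n \<and> d < n")
      case True
      have "(\<Sum>a<n. \<Sum>b<n. z (a, b) * D a b e) = (\<Sum>a<n. if a = c then z (c, d) else 0)"
      proof (rule sum.cong[OF refl])
        fix a
        have "(\<Sum>b<n. z (a, b) * D a b e) = (\<Sum>b<n. if b = d then (if a = c then z (c, d) else 0) else 0)"
          by (rule sum.cong) (auto simp: D_def Pair)
        also have "\<dots> = (if a = c then z (c, d) else 0)" using True by simp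
        finally show "(\<Sum>b<n. z (a, b) * D a b e) = (if a = c then z (c, d) else 0)" .
      qed
      then show ?thesis using True Pair by simp
    next
      case False
      hence "z e = 0" using chain1_lt[OF ch] Pair by blast
      moreover have "(\<Sum>a<n. \<Sum>b<n. z (a, b) * D a b e) = 0"
        by (rule sum.neutral, rule ballI, rule sum.neutral) (use False Pair in \<open>auto simp: D_def\<close>)
      ultimately show ?thesis by simp
    qed
  qed
  have tree0: "(\<Sum>a<n. \<Sum>b<n. z (a, b) * (Tr a e - Tr b e)) = 0" for e
  proof -
    have "(\<Sum>a<n. \<Sum>b<n. z (a, b) * (Tr a e - Tr b e))
        = (\<Sum>a<n. \<Sum>b<n. z (a, b) * Tr a e) - (\<Sum>a<n. \<Sum>b<n. z (a, b) * Tr b e)"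
      by (simp add: right_diff_distrib sum_subtractf)
    also have "(\<Sum>a<n. \<Sum>b<n. z (a, b) * Tr b e) = (\<Sum>b<n. \<Sum>a<n. z (a, b) * Tr b e)"
      by (rule sum.swap)
    also have "(\<Sum>a<n. \<Sum>b<n. z (a, b) * Tr a e) - (\<Sum>b<n. \<Sum>a<n. z (a, b) * Tr b e)
        = (\<Sum>y<n. Tr y e * ((\<Sum>x<n. z (y, x)) - (\<Sum>x<n. z (x, y))))"
      by (simp add: sum_subtractf[symmetric] right_diff_distrib sum_distrib_left mult.commute)
    also have "\<dots> = 0" using bd unfolding bd1_def by (simp add: sum_subtractf)
    finally show ?thesis .
  qed
  have zF: "z e = (\<Sum>a<n. \<Sum>b<n. F a b e)" for e
  proof -
    have "(\<Sum>a<n. \<Sum>b<n. F a b e) = (\<Sum>a<n. \<Sum>b<n. z (a, b) * D a b e + z (a, b) * (Tr a e - Tr b e))"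
      unfolding F_def by (simp add: algebra_simps)
    also have "\<dots> = (\<Sum>a<n. \<Sum>b<n. z (a, b) * D a b e) + (\<Sum>a<n. \<Sum>b<n. z (a, b) * (Tr a e - Tr b e))"
      by (simp only: sum.distrib)
    also have "\<dots> = z e" using zdec[of e] tree0[of e] by simp
    finally show ?thesis by simp
  qed
  have Fin: "inG v0 (F a b)" if ab: "a < n" "b < n" for a b
  proof (cases "z (a, b) = 0")
    case True
    then show ?thesis using G_zero assms unfolding F_def by simp
  next
    case False
    hence e: "{a, b} \<in> TT" using ch unfolding chain1_def by blast
    obtain h where h: "set h \<subseteq> {..<k}" "hrel TT [a, b] (walk n L a h)" "last (walk n L a h) = b"
      using edge_walk e by blast
    have "set [a, b] \<subseteq> {..<n}" using ab by simp
    hence hD0: "hom (path_chain [a, b]) (path_chain (walk n L a h))" using hrel_hom[OF h(2)] by blast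
    have "path_chain [a, b] = D a b" by (simp add: D_def pc_edge fun_eq_iff)
    hence hD: "hom (D a b) (path_chain (walk n L a h))" using hD0 by simp
    have ga: "set (g a) \<subseteq> {..<k}" "last (walk n L v0 (g a)) = a" using g ab by auto
    have gb: "set (g b) \<subseteq> {..<k}" "last (walk n L v0 (g b)) = b" using g ab by auto
    have rb: "set (r b) \<subseteq> {..<k}" "last (walk n L b (r b)) = v0" using r ab by auto
    let ?X = "path_chain (walk n L v0 (g a @ h @ r b))"
    let ?Y = "path_chain (walk n L v0 (g b @ r b))"
    have X: "?X e = Tr a e + path_chain (walk n L a h) e + path_chain (walk n L b (r b)) e" for e
      using pc_walk_append[OF assms(2), of "g a" "h @ r b" e] pc_walk_append[of a h "r b" e] ga h ab
      unfolding Tr_def by simp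
    have Y: "?Y e = Tr b e + path_chain (walk n L b (r b)) e" for e
      using pc_walk_append[OF assms(2), of "g b" "r b" e] gb unfolding Tr_def by simp
    have lX: "last (walk n L v0 (g a @ h @ r b)) = v0" using ga h rb walk_append walk_ne by simp
    have lY: "last (walk n L v0 (g b @ r b)) = v0" using gb rb walk_append walk_ne by simp
    have GX: "inG v0 ?X" using G_closed_walk[OF assms(2) _ lX] ga h rb by simp
    have GY: "inG v0 ?Y" using G_closed_walk[OF assms(2) _ lY] gb rb by simp
    have GXY: "inG v0 (\<lambda>e. ?X e + - ?Y e)" by (rule G_add[OF assms(2) GX G_neg[OF assms(2) GY]])
    have "hom (\<lambda>e. D a b e + (Tr a e - Tr b e)) (\<lambda>e. path_chain (walk n L a h) e + (Tr a e - Tr b e))"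
      by (rule hom_add[OF hD hom_refl])
    hence "hom (\<lambda>e. Tr a e + D a b e - Tr b e) (\<lambda>e. ?X e + - ?Y e)"
      by (rule hom_eq) (auto simp: X Y)
    hence "inG v0 (\<lambda>e. Tr a e + D a b e - Tr b e)" using GXY by (rule G_hom)
    hence "inG v0 (\<lambda>e. z (a, b) * (Tr a e + D a b e - Tr b e))" by (rule G_scale[OF assms(2)])
    then show ?thesis unfolding F_def .
  qed
  have "inG v0 (\<lambda>e. \<Sum>a<n. \<Sum>b<n. F a b e)"
  proof (rule G_sum[OF assms(2)])
    fix a assume "a \<in> {..<n}"
    show "inG v0 (\<lambda>e. \<Sum>b<n. F a b e)"
      by (rule G_sum[OF assms(2)]) (use Fin \<open>a \<in> {..<n}\<close> in auto)
  qed simp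
  moreover have "(\<lambda>e. \<Sum>a<n. \<Sum>b<n. F a b e) = z" using zF by auto
  ultimately show ?thesis by simp
qed


lemma part3_if_nat:
  assumes v: "v0 < n" and a: "admissible n L ps" "admissible n L ps'" and d: "\<forall>i<k. ps!i = ps'!i + M"
  shows "hom (path_chain (E_path n L v0 ps)) (path_chain (E_path n L v0 ps'))"
proof -
  have aM: "admissible n L (replicate k M)" unfolding admissible_def using lenL n_sum
    by (simp add: sum_distrib_left[symmetric])
  let ?A = "canon (\<lambda>i. ps'!i) @ canon (\<lambda>i. replicate k M ! i)"
  have c: "cnt ?A = ps" unfolding cnt_def using a d unfolding admissible_def
    by (intro nth_equalityI) (auto simp: canon_count lenL)
  have cl: "last (walk n L v0 ?A) = v0"
    using E_closed[OF v a(2)] E_closed[OF v aM] walk_append walk_ne by (simp add: E_canon)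
  have "hrel TT (walk n L v0 ?A) (E_path n L v0 ps)" using closed_walk[OF v _ cl] canon_set c by simp
  hence h1: "hom (path_chain (walk n L v0 ?A)) (path_chain (E_path n L v0 ps))" using hrel_hom walk_set v by blast
  have h2: "hom (\<lambda>e. path_chain (E_path n L v0 ps') e + path_chain (E_path n L v0 (replicate k M)) e)
              (\<lambda>e. path_chain (E_path n L v0 ps') e + 0)"
    using hom_add[OF hom_refl E_null[OF v]] .
  have es: "(\<lambda>e. path_chain (E_path n L v0 ps') e + path_chain (E_path n L v0 (replicate k M)) e) = path_chain (walk n L v0 ?A)"
    using E_sum[OF v a(2) aM] by (simp add: fun_eq_iff)
  have "hom (path_chain (E_path n L v0 ps)) (\<lambda>e. path_chain (E_path n L v0 ps') e + path_chain (E_path n L v0 (replicate k M)) e)"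
    unfolding es by (rule hom_sym[OF h1])
  hence "hom (path_chain (E_path n L v0 ps)) (\<lambda>e. path_chain (E_path n L v0 ps') e + 0)" using h2 by (rule hom_trans)
  thus ?thesis by (rule hom_eq) auto
qed

lemma part3_if:
  assumes v: "v0 < n" and a: "admissible n L ps" "admissible n L ps'" and d: "\<exists>m::int. \<forall>i<k. int (ps!i) - int (ps'!i) = m"
  shows "hom (path_chain (E_path n L v0 ps)) (path_chain (E_path n L v0 ps'))"
proof -
  obtain m where m: "\<forall>i<k. int (ps!i) - int (ps'!i) = m" using d by blast
  show ?thesis
  proof (cases "m \<ge> 0")
    case True
    hence "\<forall>i<k. ps!i = ps'!i + nat m" using m by force
    then show ?thesis using part3_if_nat v a by blast
  next
    case False
    hence "\<forall>i<k. ps'!i = ps!i + nat (-m)" using m by force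
    then show ?thesis using part3_if_nat v a hom_sym by blast
  qed
qed

end

locale tzg = tz + assumes gen: "generic L"
begin

definition ss :: "nat set \<Rightarrow> nat" where "ss I = (\<Sum>i\<in>I. L!i)"

definition val :: "nat \<Rightarrow> nat set \<Rightarrow> int" where
  "val i I = (if i \<in> I then 1 else 0) - (if 0 \<in> I then 1 else 0)"

lemma gen': "I \<subseteq> {..<k} \<Longrightarrow> J \<subseteq> {..<k} \<Longrightarrow> ss I = ss J \<Longrightarrow> I = J"
  using gen lenL unfolding generic_def ss_def by (auto simp: atLeast0LessThan)

lemma ss_le: "I \<subseteq> {..<k} \<Longrightarrow> ss I \<le> n"
  unfolding ss_def n_sum by (rule sum_mono2) auto

lemma ss_full: "ss {..<k} = n" unfolding ss_def n_sum by simp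

lemma uniq:
  assumes "I \<subseteq> {..<k}" "J \<subseteq> {..<k}" "ss I mod n = ss J mod n"
  shows "I = J \<or> (I = {} \<and> J = {..<k}) \<or> (I = {..<k} \<and> J = {})"
proof -
  have z: "K \<subseteq> {..<k} \<Longrightarrow> ss K = 0 \<Longrightarrow> K = {}" for K using gen'[of K "{}"] by (simp add: ss_def)
  have f: "K \<subseteq> {..<k} \<Longrightarrow> ss K = n \<Longrightarrow> K = {..<k}" for K using gen'[of K "{..<k}"] ss_full by simp
  have lI: "ss I \<le> n" and lJ: "ss J \<le> n" using ss_le assms by auto
  consider "ss I = ss J" | "ss I < ss J" | "ss J < ss I" by linarith
  then show ?thesis
  proof cases
    case 1 then show ?thesis using gen' assms by blast
  next
    case 2
    have "ss J = n"
    proof (rule ccontr)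
      assume "ss J \<noteq> n" hence "ss J < n" using lJ by simp
      thus False using assms(3) 2 by simp
    qed
    moreover hence "ss I = 0" using assms(3) 2 by simp
    ultimately show ?thesis using z f assms by blast
  next
    case 3
    have "ss I = n"
    proof (rule ccontr)
      assume "ss I \<noteq> n" hence "ss I < n" using lI by simp
      thus False using assms(3) 3 by simp
    qed
    moreover hence "ss J = 0" using assms(3) 3 by simp
    ultimately show ?thesis using z f assms by blast
  qed
qed

lemma val_uniq:
  assumes "i < k" "I \<subseteq> {..<k}" "J \<subseteq> {..<k}" "int (ss I) mod int n = int (ss J) mod int n"
  shows "val i I = val i J"
proof -
  have "ss I mod n = ss J mod n" using assms(4) by (metis of_nat_eq_iff zmod_int)
  hence "I = J \<or> (I = {} \<and> J = {..<k}) \<or> (I = {..<k} \<and> J = {})" using uniq[OF assms(2,3)] by blast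
  then show ?thesis using assms(1) k2 unfolding val_def by auto
qed

definition ff :: "nat \<Rightarrow> nat \<Rightarrow> nat \<Rightarrow> int" where
  "ff i a b = val i (SOME I. I \<subseteq> {..<k} \<and> int (ss I) mod int n = (int b - int a) mod int n)"

lemma ff_eq:
  assumes "i < k" "I \<subseteq> {..<k}" "int (ss I) mod int n = (int b - int a) mod int n"
  shows "ff i a b = val i I"
proof -
  define Q where "Q = (\<lambda>J. J \<subseteq> {..<k} \<and> int (ss J) mod int n = (int b - int a) mod int n)"
  have "Q I" using assms(2,3) unfolding Q_def by blast
  hence q: "Q (Eps Q)" by (rule someI)
  have f: "ff i a b = val i (Eps Q)" unfolding ff_def Q_def by (rule refl)
  have "val i (Eps Q) = val i I"
    by (rule val_uniq[OF assms(1)]) (use q assms(2,3) in \<open>simp_all add: Q_def\<close>)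
  thus ?thesis using f by simp
qed

lemma ind_split:
  assumes "\<sigma> permutes {..<k}" "p \<le> q" "q \<le> k"
  shows "(if y \<in> \<sigma> ` {p..<q} then 1 else 0 :: int) = (if y \<in> \<sigma> ` {..<q} then 1 else 0) - (if y \<in> \<sigma> ` {..<p} then 1 else 0)"
proof -
  have inj: "inj \<sigma>" using assms(1) permutes_inj by blast
  have "{..<q} = {..<p} \<union> {p..<q}" using assms by auto
  hence u: "\<sigma> ` {..<q} = \<sigma> ` {..<p} \<union> \<sigma> ` {p..<q}" by (simp add: image_Un)
  have d: "\<sigma> ` {..<p} \<inter> \<sigma> ` {p..<q} = {}" using inj by (auto simp: inj_eq)
  show ?thesis using u d by auto
qed

lemma ss_blk:
  assumes "\<sigma> permutes {..<k}" "p \<le> q"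
  shows "ss (\<sigma> ` {p..<q}) + P \<sigma> p = P \<sigma> q"
proof -
  have inj: "inj \<sigma>" using assms(1) permutes_inj by blast
  have "ss (\<sigma> ` {p..<q}) = (\<Sum>j\<in>{p..<q}. L!(\<sigma> j))" unfolding ss_def
    using sum.reindex[OF inj_on_subset[OF inj subset_UNIV], of "\<lambda>i. L!i" "{p..<q}"] by (simp add: comp_def)
  moreover have "P \<sigma> q = P \<sigma> p + (\<Sum>j\<in>{p..<q}. L!(\<sigma> j))" unfolding P_def
    using sum.atLeastLessThan_concat[of 0 p q "\<lambda>j. L!(\<sigma> j)"] assms by (simp add: atLeast0LessThan)
  ultimately show ?thesis by simp
qed

lemma ff_delta:
  assumes "x < n" "\<sigma> permutes {..<k}" "p < k" "q < k" "i < k"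
  shows "ff i ((x + P \<sigma> p) mod n) ((x + P \<sigma> q) mod n) = val i (\<sigma> ` {..<q}) - val i (\<sigma> ` {..<p})"
proof -
  have sk: "\<sigma> ` {..<k} = {..<k}" using assms(2) permutes_image by blast
  have r: "(int ((x + P \<sigma> q) mod n) - int ((x + P \<sigma> p) mod n)) mod int n = (int (P \<sigma> q) - int (P \<sigma> p)) mod int n"
    by (rule mod_pair)
  show ?thesis
  proof (cases "p \<le> q")
    case True
    let ?I = "\<sigma> ` {p..<q}"
    have Ik: "?I \<subseteq> {..<k}" using sk assms True by auto
    have "int (ss ?I) = int (P \<sigma> q) - int (P \<sigma> p)" using ss_blk[OF assms(2) True] by linarith
    hence "ff i ((x + P \<sigma> p) mod n) ((x + P \<sigma> q) mod n) = val i ?I" using ff_eq[OF assms(5) Ik] r by simp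
    then show ?thesis unfolding val_def using ind_split[OF assms(2) True, of i] ind_split[OF assms(2) True, of 0] assms
      by simp
  next
    case False
    hence qp: "q \<le> p" by simp
    let ?J = "\<sigma> ` {q..<p}"
    let ?I = "{..<k} - ?J"
    have Jk: "?J \<subseteq> {..<k}" using sk assms qp by auto
    have "ss {..<k} = ss ?I + ss ?J" unfolding ss_def by (rule sum.subset_diff[OF Jk]) simp
    hence "ss ?I + ss ?J = n" using ss_full by simp
    hence "int (ss ?I) = int n - (int (P \<sigma> p) - int (P \<sigma> q))" using ss_blk[OF assms(2) qp] by linarith
    hence "int (ss ?I) = (int (P \<sigma> q) - int (P \<sigma> p)) + int n" by simp
    hence "int (ss ?I) mod int n = (int (P \<sigma> q) - int (P \<sigma> p)) mod int n" by (rule mod_shift)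
    hence "ff i ((x + P \<sigma> p) mod n) ((x + P \<sigma> q) mod n) = val i ?I" using ff_eq[OF assms(5)] r by simp
    moreover have "val i ?I = - val i ?J" unfolding val_def using assms k2 by auto
    ultimately show ?thesis unfolding val_def using ind_split[OF assms(2) qp, of i] ind_split[OF assms(2) qp, of 0] assms
      by simp
  qed
qed

lemma cocycle:
  assumes "{a, b, c} \<in> TT" "i < k"
  shows "ff i b c - ff i a c + ff i a b = 0"
proof -
  obtain x \<sigma> where x: "x < n" "\<sigma> permutes {..<k}" "{a, b, c} \<subseteq> Delta n L x \<sigma>"
    using assms lenL unfolding tonnetz_def by (auto simp: atLeast0LessThan)
  obtain p where p: "p < k" "a = (x + P \<sigma> p) mod n" using x(3) lenL unfolding Delta_def P_def by auto
  obtain q where q: "q < k" "b = (x + P \<sigma> q) mod n" using x(3) lenL unfolding Delta_def P_def by auto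
  obtain r where r: "r < k" "c = (x + P \<sigma> r) mod n" using x(3) lenL unfolding Delta_def P_def by auto
  show ?thesis using ff_delta[OF x(1,2) _ _ assms(2)] p q r by simp
qed

definition Phi :: "nat \<Rightarrow> (nat \<times> nat \<Rightarrow> int) \<Rightarrow> int" where
  "Phi i z = (\<Sum>a<n. \<Sum>b<n. z (a, b) * ff i a b)"

lemma Phi_bd2:
  assumes "chain2 TT c" "i < k"
  shows "Phi i (bd2 n c) = 0"
proof -
  let ?f = "ff i"
  have "Phi i (bd2 n c) = (\<Sum>a<n. \<Sum>b<n. \<Sum>x<n. c (x, a, b) * ?f a b)
      - (\<Sum>a<n. \<Sum>b<n. \<Sum>x<n. c (a, x, b) * ?f a b) + (\<Sum>a<n. \<Sum>b<n. \<Sum>x<n. c (a, b, x) * ?f a b)"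
  proof -
    have "Phi i (bd2 n c) = (\<Sum>a<n. \<Sum>b<n. (\<Sum>x<n. c (x, a, b) * ?f a b)
        - (\<Sum>x<n. c (a, x, b) * ?f a b) + (\<Sum>x<n. c (a, b, x) * ?f a b))"
      unfolding Phi_def bd2_def
      by (rule sum.cong[OF refl], rule sum.cong[OF refl])
         (simp add: sum_distrib_right sum_subtractf[symmetric] sum.distrib[symmetric] left_diff_distrib distrib_right)
    thus ?thesis by (simp only: sum.distrib sum_subtractf)
  qed
  also have "(\<Sum>a<n. \<Sum>b<n. \<Sum>x<n. c (x, a, b) * ?f a b) = (\<Sum>u<n. \<Sum>v<n. \<Sum>w<n. c (u, v, w) * ?f v w)"
  proof -
    have "(\<Sum>a<n. \<Sum>b<n. \<Sum>x<n. c (x, a, b) * ?f a b) = (\<Sum>a<n. \<Sum>x<n. \<Sum>b<n. c (x, a, b) * ?f a b)"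
      by (rule sum.cong[OF refl], rule sum.swap)
    also have "\<dots> = (\<Sum>x<n. \<Sum>a<n. \<Sum>b<n. c (x, a, b) * ?f a b)" by (rule sum.swap)
    finally show ?thesis .
  qed
  also have "(\<Sum>a<n. \<Sum>b<n. \<Sum>x<n. c (a, x, b) * ?f a b) = (\<Sum>u<n. \<Sum>v<n. \<Sum>w<n. c (u, v, w) * ?f u w)"
    by (rule sum.cong[OF refl], rule sum.swap)
  also have "(\<Sum>u<n. \<Sum>v<n. \<Sum>w<n. c (u, v, w) * ?f v w) - (\<Sum>u<n. \<Sum>v<n. \<Sum>w<n. c (u, v, w) * ?f u w)
      + (\<Sum>a<n. \<Sum>b<n. \<Sum>x<n. c (a, b, x) * ?f a b)
      = (\<Sum>u<n. \<Sum>v<n. \<Sum>w<n. c (u, v, w) * (?f v w - ?f u w + ?f u v))"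
    by (simp add: sum.distrib sum_subtractf algebra_simps sum_distrib_left[symmetric])
  also have "\<dots> = 0"
  proof (intro sum.neutral ballI)
    fix u v w
    show "c (u, v, w) * (?f v w - ?f u w + ?f u v) = 0"
      using assms cocycle[of u v w i] unfolding chain2_def by (cases "c (u, v, w) = 0") auto
  qed
  finally show ?thesis .
qed

lemma Phi_diff: "Phi i (\<lambda>e. z e - z' e) = Phi i z - Phi i z'"
  unfolding Phi_def by (simp add: sum_subtractf left_diff_distrib)

lemma Phi_hom: "hom z z' \<Longrightarrow> i < k \<Longrightarrow> Phi i z = Phi i z'"
proof -
  assume "hom z z'" "i < k"
  then obtain c where c: "chain2 TT c" "\<forall>e. z e - z' e = bd2 n c e" unfolding homologous_def by blast
  hence "(\<lambda>e. z e - z' e) = bd2 n c" by auto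
  hence "Phi i z - Phi i z' = 0" using Phi_diff Phi_bd2 c \<open>i < k\<close> by metis
  thus ?thesis by simp
qed

lemma Phi_edge: "a < n \<Longrightarrow> b < n \<Longrightarrow> Phi i (\<lambda>e. (if e = (a, b) then 1 else 0) + z e) = ff i a b + Phi i z"
proof -
  assume ab: "a < n" "b < n"
  have "Phi i (\<lambda>e. (if e = (a, b) then 1 else 0) + z e)
      = (\<Sum>x<n. \<Sum>y<n. (if (x, y) = (a, b) then 1 else 0) * ff i x y) + Phi i z"
    unfolding Phi_def by (simp only: distrib_right sum.distrib)
  also have "(\<Sum>x<n. \<Sum>y<n. (if (x, y) = (a, b) then 1 else 0) * ff i x y) = ff i a b"
  proof -
    have "(\<Sum>x<n. \<Sum>y<n. (if (x, y) = (a, b) then 1 else 0) * ff i x y) = (\<Sum>x<n. if x = a then ff i a b else 0)"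
    proof (rule sum.cong[OF refl])
      fix x
      have "(\<Sum>y<n. (if (x, y) = (a, b) then 1 else 0) * ff i x y) = (\<Sum>y<n. if y = b then (if x = a then ff i a b else 0) else 0)"
        by (rule sum.cong) auto
      also have "\<dots> = (if x = a then ff i a b else 0)" using ab by simp
      finally show "(\<Sum>y<n. (if (x, y) = (a, b) then 1 else 0) * ff i x y) = (if x = a then ff i a b else 0)" .
    qed
    thus ?thesis using ab by simp
  qed
  finally show ?thesis .
qed

lemma Phi_zero: "Phi i (\<lambda>e. 0) = 0" unfolding Phi_def by simp

lemma Phi_walk:
  assumes "v < n" "set ts \<subseteq> {..<k}" "i < k"
  shows "Phi i (path_chain (walk n L v ts)) = int (count_list ts i) - int (count_list ts 0)"
  using assms(1,2)
proof (induction ts arbitrary: v)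
  case Nil then show ?case using Phi_zero pc_single by (simp add: fun_eq_iff[symmetric])
next
  case (Cons t ts)
  let ?w = "(v + L!t) mod n"
  obtain R where R: "walk n L ?w ts = ?w # R" by (cases ts) auto
  have w: "?w < n" using n_pos by simp
  have "path_chain (walk n L v (t # ts)) = (\<lambda>e. (if e = (v, ?w) then 1 else 0) + path_chain (walk n L ?w ts) e)"
    using R by (simp add: pc_cons2 fun_eq_iff)
  hence "Phi i (path_chain (walk n L v (t # ts))) = ff i v ?w + Phi i (path_chain (walk n L ?w ts))"
    using Phi_edge Cons.prems w by simp
  moreover have "ff i v ?w = val i {t}"
  proof (rule ff_eq[OF assms(3)])
    show "{t} \<subseteq> {..<k}" using Cons.prems by simp
    show "int (ss {t}) mod int n = (int ?w - int v) mod int n"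
      using mod_step[OF Cons.prems(1), of "L!t"] by (simp add: ss_def)
  qed
  ultimately show ?case using Cons w unfolding val_def by auto
qed

lemma Phi_E:
  assumes "v0 < n" "i < k"
  shows "Phi i (path_chain (E_path n L v0 ps)) = int (ps!i) - int (ps!0)"
  using Phi_walk[OF assms(1) canon_set assms(2)] assms k2 by (simp add: E_canon canon_count)

lemma part3_only:
  assumes "v0 < n" "hom (path_chain (E_path n L v0 ps)) (path_chain (E_path n L v0 ps'))"
  shows "\<exists>m::int. \<forall>i<k. int (ps!i) - int (ps'!i) = m"
proof (rule exI[of _ "int (ps!0) - int (ps'!0)"], intro allI impI)
  fix i assume "i < k"
  hence "int (ps!i) - int (ps!0) = int (ps'!i) - int (ps'!0)" using Phi_hom[OF assms(2)] Phi_E assms by metis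
  thus "int (ps!i) - int (ps'!i) = int (ps!0) - int (ps'!0)" by simp
qed

end
theorem proposition4p1:
  fixes L :: "nat list" and n k v0 :: nat
  assumes "k \<ge> 2" and "length L = k" and "\<forall>i<k. L!i > 0"
    and "generic L" and "reduced L" and "n = sum_list L" and "v0 < n"
  shows "(\<forall>p. closed_edge_path (tonnetz n L) v0 p \<longrightarrow>
            (\<exists>ps. admissible n L ps \<and> edge_homotopic (tonnetz n L) p (E_path n L v0 ps)))
       \<and> (\<forall>z. cycle1 n (tonnetz n L) z \<longrightarrow>
            (\<exists>ps. admissible n L ps \<and> homologous n (tonnetz n L) z (path_chain (E_path n L v0 ps))))
       \<and> (\<forall>ps ps'. admissible n L ps \<longrightarrow> admissible n L ps' \<longrightarrow>
            (homologous n (tonnetz n L) (path_chain (E_path n L v0 ps)) (path_chain (E_path n L v0 ps'))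
             \<longleftrightarrow> (\<exists>m::int. \<forall>i<k. int (ps!i) - int (ps'!i) = m)))"
proof -
  interpret tzg n L k using assms by unfold_locales auto
  show ?thesis
  proof (intro conjI allI impI)
    fix p assume "closed_edge_path (tonnetz n L) v0 p"
    then show "\<exists>ps. admissible n L ps \<and> edge_homotopic (tonnetz n L) p (E_path n L v0 ps)"
      using part1 assms(7) by blast
  next
    fix z assume "cycle1 n (tonnetz n L) z"
    then show "\<exists>ps. admissible n L ps \<and> homologous n (tonnetz n L) z (path_chain (E_path n L v0 ps))"
      using part2[OF assms(5) assms(7)] unfolding inG_def by blast
  next
    fix ps ps' assume a: "admissible n L ps" "admissible n L ps'"
    show "homologous n (tonnetz n L) (path_chain (E_path n L v0 ps)) (path_chain (E_path n L v0 ps'))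
             \<longleftrightarrow> (\<exists>m::int. \<forall>i<k. int (ps!i) - int (ps'!i) = m)"
      using part3_if[OF assms(7) a] part3_only[OF assms(7)] by blast
  qed
qed

end
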